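(* For any finite simple graph $G$, the quotient of the separated deleted join $\widetilde Z(G)$ of the flag complex $\overline G$ by its free involution $\iota$ equals $Z(G)$. Consequently $\widetilde Z(G)$ is a double cover of $Z(G)$.
   Context: $\overline G$ is the flag (clique) complex of $G$. $\widetilde Z(G)$ is the simplicial complex on $V(G) \times \{-1,+1\}$ whose faces are $(\sigma \times \{-1\}) \cup (\rho \times \{+1\})$ for (possibly empty) cliques $\sigma,\rho$ of $G$ that are disjoint and have no edge of $G$ between them; $\iota$ swaps $(v,-1)$ and $(v,+1)$, and the quotient is the simplicial complex on $V(G)$ whose faces are the images of faces of $\widetilde Z(G)$. $Z(G)$ is the simplicial complex on $V(G)$ with complete 1-skeleton, in which a triangle is a face if and only if an odd number of its edges lie in $G$, and a simplex of dimension at least $2$ is a face if and only if all its triangles are faces. *)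

theory Defs
  imports Main
begin

definition simple_graph :: "'a set \<Rightarrow> ('a \<Rightarrow> 'a \<Rightarrow> bool) \<Rightarrow> bool" where
  "simple_graph V E \<longleftrightarrow> finite V \<and> (\<forall>x y. E x y \<longrightarrow> x \<in> V \<and> y \<in> V)
     \<and> (\<forall>x y. E x y \<longrightarrow> E y x) \<and> (\<forall>x. \<not> E x x)"

definition is_clique :: "'a set \<Rightarrow> ('a \<Rightarrow> 'a \<Rightarrow> bool) \<Rightarrow> 'a set \<Rightarrow> bool" where
  "is_clique V E S \<longleftrightarrow> S \<subseteq> V \<and> (\<forall>x\<in>S. \<forall>y\<in>S. x \<noteq> y \<longrightarrow> E x y)"

definition flag_complex :: "'a set \<Rightarrow> ('a \<Rightarrow> 'a \<Rightarrow> bool) \<Rightarrow> 'a set set" where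
  "flag_complex V E = {S. is_clique V E S}"

definition Ztilde :: "'a set \<Rightarrow> ('a \<Rightarrow> 'a \<Rightarrow> bool) \<Rightarrow> ('a \<times> int) set set" where
  "Ztilde V E = {(\<sigma> \<times> {-1}) \<union> (\<rho> \<times> {1}) | \<sigma> \<rho>.
      \<sigma> \<in> flag_complex V E \<and> \<rho> \<in> flag_complex V E \<and> \<sigma> \<inter> \<rho> = {}
      \<and> (\<forall>x\<in>\<sigma>. \<forall>y\<in>\<rho>. \<not> E x y)}"

definition iota :: "'a \<times> int \<Rightarrow> 'a \<times> int" where
  "iota p = (fst p, - snd p)"

(* Quotient complex on V: images of faces of Ztilde under the projection
(which identifies the two points of each iota-orbit). *)
definition Ztilde_quotient :: "'a set \<Rightarrow> ('a \<Rightarrow> 'a \<Rightarrow> bool) \<Rightarrow> 'a set set" where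
  "Ztilde_quotient V E = (\<lambda>F. fst ` F) ` Ztilde V E"

definition num_edges_in :: "('a \<Rightarrow> 'a \<Rightarrow> bool) \<Rightarrow> 'a set \<Rightarrow> nat" where
  "num_edges_in E T = card {{x, y} | x y. x \<in> T \<and> y \<in> T \<and> E x y}"

definition Z :: "'a set \<Rightarrow> ('a \<Rightarrow> 'a \<Rightarrow> bool) \<Rightarrow> 'a set set" where
  "Z V E = {S. S \<subseteq> V \<and> (card S \<le> 2 \<or>
      (\<forall>T. T \<subseteq> S \<and> card T = 3 \<longrightarrow> odd (num_edges_in E T)))}"

end

theory Submission
  imports Defs
begin

definition mk :: "'a set \<Rightarrow> 'a set \<Rightarrow> ('a \<times> int) set" where
  "mk s r = s \<times> {-1} \<union> r \<times> {1}"

lemma mk_fst: "fst ` mk s r = s \<union> r"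
  unfolding mk_def by force

lemma mk_eq: "mk s r = mk s' r' \<longleftrightarrow> s = s' \<and> r = r'"
proof
  assume h: "mk s r = mk s' r'"
  have "s = s'"
  proof -
    have "\<And>x. x \<in> s \<longleftrightarrow> (x, -1) \<in> mk s r" unfolding mk_def by auto
    moreover have "\<And>x. x \<in> s' \<longleftrightarrow> (x, -1) \<in> mk s' r'" unfolding mk_def by auto
    ultimately show ?thesis using h by blast
  qed
  moreover have "r = r'"
  proof -
    have "\<And>x. x \<in> r \<longleftrightarrow> (x, 1) \<in> mk s r" unfolding mk_def by auto
    moreover have "\<And>x. x \<in> r' \<longleftrightarrow> (x, 1) \<in> mk s' r'" unfolding mk_def by auto
    ultimately show ?thesis using h by blast
  qed
  ultimately show "s = s' \<and> r = r'" by simp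
qed simp

lemma mk_iota: "iota ` mk s r = mk r s"
  unfolding mk_def iota_def by force

definition good :: "'a set \<Rightarrow> ('a \<Rightarrow> 'a \<Rightarrow> bool) \<Rightarrow> 'a set \<Rightarrow> 'a set \<Rightarrow> bool" where
  "good V E s r \<longleftrightarrow> is_clique V E s \<and> is_clique V E r \<and> s \<inter> r = {}
      \<and> (\<forall>x\<in>s. \<forall>y\<in>r. \<not> E x y)"

lemma Ztilde_mk: "Ztilde V E = {mk s r | s r. good V E s r}"
  unfolding Ztilde_def mk_def good_def flag_complex_def by auto

lemma edges3:
  assumes sym: "\<forall>x y. E x y \<longrightarrow> E y x" and irr: "\<forall>x. \<not> E x x" and d: "a \<noteq> b" "b \<noteq> c" "a \<noteq> c"
  shows "odd (num_edges_in E {a,b,c}) \<longleftrightarrow> (E a b = (E b c = E a c))"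
proof -
  have "{{x, y} | x y. x \<in> {a,b,c} \<and> y \<in> {a,b,c} \<and> E x y} =
     (if E a b then {{a,b}} else {}) \<union> (if E b c then {{b,c}} else {}) \<union> (if E a c then {{a,c}} else {})"
  proof (rule set_eqI)
    fix p
    show "p \<in> {{x, y} | x y. x \<in> {a,b,c} \<and> y \<in> {a,b,c} \<and> E x y} \<longleftrightarrow> p \<in> (if E a b then {{a,b}} else {}) \<union> (if E b c then {{b,c}} else {}) \<union> (if E a c then {{a,c}} else {})"
    proof
      assume "p \<in> {{x, y} | x y. x \<in> {a,b,c} \<and> y \<in> {a,b,c} \<and> E x y}"
      then obtain x y where p: "p = {x,y}" "x \<in> {a,b,c}" "y \<in> {a,b,c}" "E x y" by blast
      then show "p \<in> (if E a b then {{a,b}} else {}) \<union> (if E b c then {{b,c}} else {}) \<union> (if E a c then {{a,c}} else {})"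
        using sym irr by (auto simp: insert_commute)
    next
      assume "p \<in> (if E a b then {{a,b}} else {}) \<union> (if E b c then {{b,c}} else {}) \<union> (if E a c then {{a,c}} else {})"
      then show "p \<in> {{x, y} | x y. x \<in> {a,b,c} \<and> y \<in> {a,b,c} \<and> E x y}"
        by (auto split: if_splits)
    qed
  qed
  then have "num_edges_in E {a,b,c} = card ((if E a b then {{a,b}} else {}) \<union> (if E b c then {{b,c}} else {}) \<union> (if E a c then {{a,c}} else {}))"
    unfolding num_edges_in_def by (simp only:)
  then show ?thesis using d
    by (cases "E a b"; cases "E b c"; cases "E a c") (auto simp: doubleton_eq_iff card_insert_if)
qed

lemma good_Z:
  assumes G: "simple_graph V E" and g: "good V E s r"
  shows "s \<union> r \<in> Z V E"
proof -
  have sym: "\<forall>x y. E x y \<longrightarrow> E y x" using G unfolding simple_graph_def by blast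
  have irr: "\<forall>x. \<not> E x x" using G unfolding simple_graph_def by blast
  have sub: "s \<union> r \<subseteq> V" using g unfolding good_def is_clique_def by blast
  have "odd (num_edges_in E T)" if T: "T \<subseteq> s \<union> r" "card T = 3" for T
  proof -
    obtain a b c where abc: "T = {a,b,c}" "a \<noteq> b" "b \<noteq> c" "a \<noteq> c"
      using T(2) card_3_iff by metis
    have "a \<in> s \<union> r" "b \<in> s \<union> r" "c \<in> s \<union> r" using T abc by auto
    then have "E a b = (E b c = E a c)"
      using g abc sym unfolding good_def is_clique_def by blast
    then show ?thesis using edges3[OF sym irr abc(2-4)] abc(1) by simp
  qed
  then show ?thesis unfolding Z_def using sub by blast
qed

definition part1 :: "('a \<Rightarrow> 'a \<Rightarrow> bool) \<Rightarrow> 'a set \<Rightarrow> 'a \<Rightarrow> 'a set" where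
  "part1 E S a = insert a {x \<in> S. E a x}"

lemma Z_good:
  assumes G: "simple_graph V E" and S: "S \<in> Z V E" and a: "a \<in> S"
  shows "good V E (part1 E S a) (S - part1 E S a)"
proof -
  have sym: "\<forall>x y. E x y \<longrightarrow> E y x" using G unfolding simple_graph_def by blast
  have irr: "\<forall>x. \<not> E x x" using G unfolding simple_graph_def by blast
  have fin: "finite V" using G unfolding simple_graph_def by blast
  have SV: "S \<subseteq> V" using S unfolding Z_def by blast
  have tri: "E a x = (E x y = E a y)" if "x \<in> S" "y \<in> S" "a \<noteq> x" "x \<noteq> y" "a \<noteq> y" for x y
  proof -
    have T: "{a,x,y} \<subseteq> S" "card {a,x,y} = 3" using that a by auto
    have "card S \<ge> 3" using card_mono[OF finite_subset[OF SV fin] T(1)] T(2) by simp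
    then have "odd (num_edges_in E {a,x,y})" using S T unfolding Z_def by auto
    then show ?thesis using edges3[OF sym irr that(3,4,5)] by simp
  qed
  show ?thesis unfolding good_def is_clique_def part1_def
  proof (intro conjI ballI impI)
    show "insert a {x \<in> S. E a x} \<subseteq> V" using SV a by auto
    show "S - insert a {x \<in> S. E a x} \<subseteq> V" using SV by auto
    fix x y
    { assume "x \<in> insert a {x \<in> S. E a x}" "y \<in> insert a {x \<in> S. E a x}" "x \<noteq> y"
      then show "E x y" using tri[of x y] sym by auto }
    { assume "x \<in> S - insert a {x \<in> S. E a x}" "y \<in> S - insert a {x \<in> S. E a x}" "x \<noteq> y"
      then show "E x y" using tri[of x y] sym by auto }
    { assume "x \<in> insert a {x \<in> S. E a x}" "y \<in> S - insert a {x \<in> S. E a x}"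
      then show "\<not> E x y" using tri[of x y] sym by auto }
  qed auto
qed

lemma unique_split:
  assumes G: "simple_graph V E" and S: "S \<in> Z V E" and a: "a \<in> S"
    and g: "good V E s r" and u: "s \<union> r = S" and as: "a \<in> s"
  shows "s = part1 E S a \<and> r = S - part1 E S a"
proof -
  have cs: "\<forall>x\<in>s. \<forall>y\<in>s. x \<noteq> y \<longrightarrow> E x y" and dj: "s \<inter> r = {}"
    and ne: "\<forall>x\<in>s. \<forall>y\<in>r. \<not> E x y"
    using g unfolding good_def is_clique_def by auto
  have "s = part1 E S a"
  proof
    show "s \<subseteq> part1 E S a"
    proof
      fix x assume xs: "x \<in> s"
      have "x \<in> S" using u xs by auto
      moreover have "x \<noteq> a \<Longrightarrow> E a x" using cs as xs by auto
      ultimately show "x \<in> part1 E S a" unfolding part1_def by auto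
    qed
    show "part1 E S a \<subseteq> s"
    proof
      fix x assume x: "x \<in> part1 E S a"
      show "x \<in> s"
      proof (cases "x = a")
        case True then show ?thesis using as by simp
      next
        case False
        then have "x \<in> S" "E a x" using x unfolding part1_def by auto
        then have "x \<in> s \<or> x \<in> r" using u by auto
        then show ?thesis using ne as \<open>E a x\<close> by auto
      qed
    qed
  qed
  moreover then have "r = S - part1 E S a" using dj u by auto
  ultimately show ?thesis by simp
qed

lemma good_swap: "good V E s r \<Longrightarrow> simple_graph V E \<Longrightarrow> good V E r s"
proof -
  assume g: "good V E s r" and G: "simple_graph V E"
  have sym: "\<forall>x y. E x y \<longrightarrow> E y x" using G unfolding simple_graph_def by blast
  show "good V E r s" using g sym unfolding good_def by (auto simp: Int_commute) blast
qed

theorem theorem3p3: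
  fixes V :: "'a set" and E :: "'a \<Rightarrow> 'a \<Rightarrow> bool"
  assumes "simple_graph V E"
  shows "Ztilde_quotient V E = Z V E
    \<and> (\<forall>F\<in>Ztilde V E. inj_on fst F \<and> iota ` F \<in> Ztilde V E \<and> (F \<noteq> {} \<longrightarrow> iota ` F \<noteq> F))
    \<and> (\<forall>\<tau>\<in>Z V E. \<tau> \<noteq> {} \<longrightarrow> card {F \<in> Ztilde V E. fst ` F = \<tau>} = 2)"
proof (intro conjI ballI impI)
  note G = assms
  show "Ztilde_quotient V E = Z V E"
  proof
    show "Ztilde_quotient V E \<subseteq> Z V E"
    proof
      fix S assume "S \<in> Ztilde_quotient V E"
      then obtain s r where "S = fst ` mk s r" "good V E s r"
        unfolding Ztilde_quotient_def Ztilde_mk by blast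
      then show "S \<in> Z V E" using good_Z[OF G] mk_fst by metis
    qed
    show "Z V E \<subseteq> Ztilde_quotient V E"
    proof
      fix S assume S: "S \<in> Z V E"
      show "S \<in> Ztilde_quotient V E"
      proof (cases "S = {}")
        case True
        have "good V E {} {}" unfolding good_def is_clique_def by simp
        then have "mk {} {} \<in> Ztilde V E" unfolding Ztilde_mk by blast
        then have "fst ` mk {} {} \<in> Ztilde_quotient V E" unfolding Ztilde_quotient_def by (rule imageI)
        moreover have "fst ` mk {} {} = S" using True by (simp add: mk_fst)
        ultimately show ?thesis by simp
      next
        case False
        then obtain a where a: "a \<in> S" by blast
        have "part1 E S a \<subseteq> S" using a unfolding part1_def by auto
        then have eq: "fst ` mk (part1 E S a) (S - part1 E S a) = S" by (simp add: mk_fst Un_absorb1)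
        have "mk (part1 E S a) (S - part1 E S a) \<in> Ztilde V E"
          unfolding Ztilde_mk using Z_good[OF G S a] by blast
        then have "fst ` mk (part1 E S a) (S - part1 E S a) \<in> Ztilde_quotient V E"
          unfolding Ztilde_quotient_def by (rule imageI)
        then show ?thesis using eq by simp
      qed
    qed
  qed
next
  note G = assms
  fix F assume "F \<in> Ztilde V E"
  then obtain s r where F: "F = mk s r" and g: "good V E s r" unfolding Ztilde_mk by blast
  show "inj_on fst F" using g unfolding F mk_def good_def inj_on_def by auto
  show "iota ` F \<in> Ztilde V E" unfolding F mk_iota Ztilde_mk using good_swap[OF g G] by blast
  assume "F \<noteq> {}"
  then have "s \<noteq> {} \<or> r \<noteq> {}" unfolding F mk_def by auto
  then show "iota ` F \<noteq> F" unfolding F mk_iota mk_eq using g unfolding good_def by auto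
next
  note G = assms
  fix S assume S: "S \<in> Z V E" and ne: "S \<noteq> {}"
  then obtain a where a: "a \<in> S" by blast
  define s where "s = part1 E S a"
  define r where "r = S - s"
  have sS: "s \<subseteq> S" using a unfolding s_def part1_def by auto
  have gsr: "good V E s r" unfolding s_def r_def using Z_good[OF G S a] .
  have "{F \<in> Ztilde V E. fst ` F = S} = {mk s r, mk r s}"
  proof
    show "{mk s r, mk r s} \<subseteq> {F \<in> Ztilde V E. fst ` F = S}"
    proof -
      have e: "fst ` mk s r = S" "fst ` mk r s = S" using sS unfolding mk_fst r_def by auto
      have "mk s r \<in> Ztilde V E" "mk r s \<in> Ztilde V E"
        unfolding Ztilde_mk using gsr good_swap[OF gsr G] by blast+
      then show ?thesis using e by blast
    qed
    show "{F \<in> Ztilde V E. fst ` F = S} \<subseteq> {mk s r, mk r s}"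
    proof
      fix F assume FF: "F \<in> {F \<in> Ztilde V E. fst ` F = S}"
      then obtain s' r' where F: "F = mk s' r'" and g: "good V E s' r'"
        unfolding Ztilde_mk by blast
      have "fst ` F = S" using FF by simp
      then have u: "s' \<union> r' = S" unfolding F mk_fst .
      have "a \<in> s' \<or> a \<in> r'" using a u by auto
      then show "F \<in> {mk s r, mk r s}"
      proof
        assume "a \<in> s'"
        then have "s' = s \<and> r' = r" using unique_split[OF G S a g u] s_def r_def by simp
        then show ?thesis using F by simp
      next
        assume "a \<in> r'"
        moreover have "r' \<union> s' = S" using u by (simp add: Un_commute)
        ultimately have "r' = s \<and> s' = r" using unique_split[OF G S a good_swap[OF g G]] s_def r_def by simp
        then show ?thesis using F by simp
      qed
    qed
  qed
  moreover have "mk s r \<noteq> mk r s"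
  proof
    assume h: "mk s r = mk r s"
    have "s = r \<and> r = s" using mk_eq[of s r r s] h by (rule iffD1)
    then have "s = r" by (rule conjunct1)
    moreover have "s \<inter> r = {}" using gsr unfolding good_def by blast
    moreover have "a \<in> s" unfolding s_def part1_def by simp
    ultimately show False by blast
  qed
  ultimately show "card {F \<in> Ztilde V E. fst ` F = S} = 2" by (simp only: card_2_iff) blast
qed

end
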